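(* Let $M$ be an infinite subset of $\mathbb{N}$ and let $k,l\in\mathbb{N}$. For every finite partition $\mathrm{Plm}_l([M]^k)=\bigcup_{j=1}^p P_j$ there exist an infinite $L\subseteq M$ and $1\le j_0\le p$ such that $\mathrm{Plm}_l([L]^k)\subseteq P_{j_0}$.
   Context: For $M\subseteq\mathbb{N}$ infinite and $k\in\mathbb{N}$, $[M]^k$ is the set of $k$-element subsets of $M$; an element $s\in[M]^k$ is identified with its increasing enumeration $s(1)<\dots<s(k)$. A finite sequence $(s_j)_{j=1}^l$ in $[M]^k$ is a plegma family if (i) for every $1\le i\le k$, $s_1(i)<s_2(i)<\dots<s_l(i)$, and (ii) for every $1\le i<k$, $s_l(i)<s_1(i+1)$. $\mathrm{Plm}_l([M]^k)$ denotes the set of all plegma families of length $l$ in $[M]^k$. *)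

theory Defs
  imports Main
begin

definition kSubsets :: "nat set \<Rightarrow> nat \<Rightarrow> nat set set" where
  "kSubsets M k = {s. s \<subseteq> M \<and> finite s \<and> card s = k}"

text \<open>s(i): the i-th element (1-indexed) of the increasing enumeration of a finite set s.\<close>
definition elem :: "nat set \<Rightarrow> nat \<Rightarrow> nat" where
  "elem s i = sorted_list_of_set s ! (i - 1)"

text \<open>A finite sequence s_1,...,s_l (list, s_j = ss ! (j-1)) of k-sets is plegma.\<close>
definition is_plegma :: "nat \<Rightarrow> nat set list \<Rightarrow> bool" where
  "is_plegma k ss \<longleftrightarrow>
     (\<forall>i\<in>{1..k}. \<forall>j. Suc j < length ss \<longrightarrow> elem (ss ! j) i < elem (ss ! Suc j) i) \<and>
     (ss \<noteq> [] \<longrightarrow> (\<forall>i. 1 \<le> i \<and> i < k \<longrightarrow> elem (last ss) i < elem (hd ss) (Suc i)))"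

definition Plm :: "nat \<Rightarrow> nat set \<Rightarrow> nat \<Rightarrow> nat set list set" where
  "Plm l M k = {ss. length ss = l \<and> set ss \<subseteq> kSubsets M k \<and> is_plegma k ss}"

end

theory Submission
  imports Defs "HOL-Library.Ramsey"
begin

lemma sl_img:
  fixes g :: "nat \<Rightarrow> nat"
  assumes "\<And>a b. a < b \<Longrightarrow> b < n \<Longrightarrow> g a < g b"
  shows "sorted_list_of_set (g ` {..<n}) = map g [0..<n] \<and> card (g ` {..<n}) = n"
proof -
  have sw: "sorted_wrt (<) (map g [0..<n])" using assms by (auto simp: sorted_wrt_iff_nth_less)
  have d: "distinct (map g [0..<n])" using sw strict_sorted_iff by blast
  have s: "set (map g [0..<n]) = g`{..<n}" by auto
  have c: "card (g ` {..<n}) = n" using distinct_card[OF d] s by simp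
  have "sorted_list_of_set (g ` {..<n}) = map g [0..<n]"
    using sorted_list_of_set_unique[of "g`{..<n}" "map g [0..<n]"] sw s c by simp
  with c show ?thesis by simp
qed

definition blk :: "nat \<Rightarrow> nat \<Rightarrow> nat set \<Rightarrow> nat \<Rightarrow> nat set" where
  "blk k l X j = (\<lambda>i. sorted_list_of_set X ! (i*l+j)) ` {..<k}"

definition fX :: "nat \<Rightarrow> nat \<Rightarrow> nat set \<Rightarrow> nat set list" where
  "fX k l X = map (\<lambda>j. blk k l X j) [0..<l]"

lemma idx_lt: "b < k \<Longrightarrow> j < l \<Longrightarrow> b*l+j < k*(l::nat)"
proof -
  assume "b < k" "j < l"
  then have "b*l+j < (b+1)*l" by simp
  also have "\<dots> \<le> k*l" using \<open>b<k\<close> by (intro mult_right_mono) auto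
  finally show ?thesis .
qed

lemma lemA:
  assumes "finite X" "card X = k*l" "X \<subseteq> M"
  shows "fX k l X \<in> Plm l M k"
proof -
  define xs where "xs = sorted_list_of_set X"
  have len: "length xs = k*l" using assms xs_def by simp
  have sw: "sorted_wrt (<) xs" using xs_def by simp
  have sx: "set xs = X" using xs_def assms by simp
  have lt: "\<And>a b. a < b \<Longrightarrow> b < k*l \<Longrightarrow> xs!a < xs!b" using sw len
    by (simp add: sorted_wrt_iff_nth_less)
  have blk: "\<And>j. j < l \<Longrightarrow> sorted_list_of_set (blk k l X j) = map (\<lambda>i. xs!(i*l+j)) [0..<k]
      \<and> card (blk k l X j) = k"
  proof -
    fix j assume j: "j < l"
    have "\<And>a b. a < b \<Longrightarrow> b < k \<Longrightarrow> xs!(a*l+j) < xs!(b*l+j)"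
      using lt idx_lt j by (simp add: mult_less_mono1)
    from sl_img[of k "\<lambda>i. xs!(i*l+j)", OF this] show "?thesis j"
      unfolding blk_def xs_def by blast
  qed
  have el: "\<And>j i. j < l \<Longrightarrow> 1 \<le> i \<Longrightarrow> i \<le> k \<Longrightarrow> elem (blk k l X j) i = xs!((i-1)*l+j)"
  proof -
    fix j i assume a: "j < l" "1 \<le> i" "i \<le> k"
    then have "i - 1 < k" by simp
    then show "elem (blk k l X j) i = xs!((i-1)*l+j)" using blk[OF a(1)] by (simp add: elem_def)
  qed
  have sub: "\<And>j. j < l \<Longrightarrow> blk k l X j \<in> kSubsets M k"
  proof -
    fix j assume j: "j < l"
    have "blk k l X j \<subseteq> X" unfolding blk_def xs_def[symmetric] using sx len idx_lt j
      by auto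
    then show "blk k l X j \<in> kSubsets M k" using blk j assms
      by (auto simp: kSubsets_def intro: finite_subset)
  qed
  have p1: "\<forall>i\<in>{1..k}. \<forall>j. Suc j < length (fX k l X) \<longrightarrow>
      elem (fX k l X ! j) i < elem (fX k l X ! Suc j) i"
  proof (intro ballI allI impI)
    fix i j assume i: "i \<in> {1..k}" and j: "Suc j < length (fX k l X)"
    then have jl: "Suc j < l" by (simp add: fX_def)
    have "(i-1)*l + Suc j < k*l" using idx_lt[of "i-1" k "Suc j" l] i jl by auto
    then show "elem (fX k l X ! j) i < elem (fX k l X ! Suc j) i"
      using el[of j i] el[of "Suc j" i] i jl lt[of "(i-1)*l+j" "(i-1)*l+Suc j"]
      by (simp add: fX_def)
  qed
  have p2: "fX k l X \<noteq> [] \<longrightarrow> (\<forall>i. 1 \<le> i \<and> i < k \<longrightarrow>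
      elem (last (fX k l X)) i < elem (hd (fX k l X)) (Suc i))"
  proof (intro impI allI)
    fix i assume ne: "fX k l X \<noteq> []" and i: "1 \<le> i \<and> i < k"
    then have l: "l > 0" by (simp add: fX_def)
    have la: "last (fX k l X) = blk k l X (l-1)" using l
      by (simp add: fX_def last_map)
    have hd: "hd (fX k l X) = blk k l X 0" using l
      by (simp add: fX_def hd_map)
    have e: "(i-1)*l + l = i*l" using i by (cases i) auto
    have a: "(i-1)*l + (l-1) < i*l" using e l by linarith
    have b: "i*l + 0 < k*l" using idx_lt[of i k 0 l] i l by simp
    show "elem (last (fX k l X)) i < elem (hd (fX k l X)) (Suc i)"
      using la hd el[of "l-1" i] el[of 0 "Suc i"] i l lt[OF a] b by simp
  qed
  show ?thesis unfolding Plm_def is_plegma_def using p1 p2 sub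
    by (auto simp: fX_def)
qed

lemma set_elem:
  assumes "finite s" "card s = k"
  shows "s = (\<lambda>i. elem s (i+1)) ` {..<k}"
proof -
  have "s = set (sorted_list_of_set s)" using assms by simp
  also have "\<dots> = (\<lambda>i. sorted_list_of_set s ! i) ` {..<k}"
    using assms by (auto simp: set_conv_nth)
  finally show ?thesis by (simp add: elem_def)
qed

lemma lemB:
  assumes "ss \<in> Plm l L k"
  shows "\<Union>(set ss) \<subseteq> L \<and> finite (\<Union>(set ss)) \<and> card (\<Union>(set ss)) = k*l
     \<and> fX k l (\<Union>(set ss)) = ss"
proof (cases "l = 0")
  case True
  then have "ss = []" using assms by (simp add: Plm_def)
  then show ?thesis using True by (simp add: fX_def)
next
  case False
  then have l: "l > 0" by simp
  have len: "length ss = l" and sets: "\<And>j. j < l \<Longrightarrow> ss!j \<in> kSubsets L k"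
    and pl1: "\<And>i j. i\<in>{1..k} \<Longrightarrow> Suc j < length ss \<Longrightarrow> elem (ss ! j) i < elem (ss ! Suc j) i"
    and pl2: "\<And>i. 1 \<le> i \<Longrightarrow> i < k \<Longrightarrow> elem (last ss) i < elem (hd ss) (Suc i)"
    using assms l unfolding Plm_def is_plegma_def by (auto dest: nth_mem)
  have ne: "ss \<noteq> []" using len l by auto
  define \<phi> where "\<phi> n = elem (ss!(n mod l)) (n div l + 1)" for n
  have step: "\<phi> n < \<phi> (Suc n)" if n: "Suc n < k*l" for n
  proof -
    define i where "i = n div l"
    define j where "j = n mod l"
    have jl: "j < l" using l j_def by simp
    have nij: "n = i*l + j" using i_def j_def by simp
    have ik: "i < k" using n i_def by (simp add: less_mult_imp_div_less)
    show ?thesis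
    proof (cases "Suc j < l")
      case True
      then have "Suc (n mod l) \<noteq> l" using j_def by simp
      then have "Suc n mod l = Suc j" "Suc n div l = i"
        by (simp_all add: mod_Suc div_Suc i_def j_def)
      then show ?thesis using pl1[of "i+1" j] ik True len i_def j_def
        by (simp add: \<phi>_def)
    next
      case False
      then have sj: "Suc j = l" using jl by simp
      then have "Suc (n mod l) = l" using j_def by simp
      then have "Suc n mod l = 0" "Suc n div l = Suc i"
        by (simp_all add: mod_Suc div_Suc i_def j_def)
      have "Suc n = Suc i * l" using nij sj by simp
      then have "Suc i * l < k * l" using n by simp
      then have "Suc i < k" by (simp only: mult_less_cancel2)
      moreover have "last ss = ss!j" using ne len sj by (metis diff_Suc_1 last_conv_nth)
      moreover have "hd ss = ss!0" using ne by (simp add: hd_conv_nth)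
      ultimately show ?thesis using pl2[of "Suc i"] \<open>Suc n mod l = 0\<close> \<open>Suc n div l = Suc i\<close>
          i_def j_def by (simp add: \<phi>_def)
    qed
  qed
  have mono: "\<phi> a < \<phi> b" if "a < b" "b < k*l" for a b
    using that
  proof (induction b)
    case 0 then show ?case by simp
  next
    case (Suc b)
    show ?case
    proof (cases "a = b")
      case True then show ?thesis using step Suc.prems by simp
    next
      case False
      then have "\<phi> a < \<phi> b" using Suc by simp
      also have "\<dots> < \<phi> (Suc b)" using step Suc.prems by simp
      finally show ?thesis .
    qed
  qed
  have ssj: "ss!j = (\<lambda>i. elem (ss!j) (i+1)) ` {..<k}" if "j < l" for j
    using set_elem sets[OF that] by (simp add: kSubsets_def)
  have U: "\<Union>(set ss) = \<phi> ` {..<k*l}"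
  proof
    show "\<Union>(set ss) \<subseteq> \<phi> ` {..<k*l}"
    proof
      fix x assume "x \<in> \<Union>(set ss)"
      then obtain j where j: "j < l" "x \<in> ss!j" using len by (auto simp: in_set_conv_nth)
      then obtain i where i: "i < k" "x = elem (ss!j) (i+1)" using ssj[OF j(1)] by auto
      have "(i*l+j) mod l = j" "(i*l+j) div l = i" using j(1) by auto
      then have "x = \<phi> (i*l+j)" using i by (simp add: \<phi>_def)
      moreover have "i*l+j < k*l" using idx_lt i j by simp
      ultimately show "x \<in> \<phi> ` {..<k*l}" by blast
    qed
  next
    show "\<phi> ` {..<k*l} \<subseteq> \<Union>(set ss)"
    proof
      fix x assume "x \<in> \<phi> ` {..<k*l}"
      then obtain n where n: "n < k*l" "x = \<phi> n" by auto
      have "n div l < k" using n l by (simp add: less_mult_imp_div_less)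
      then have "x \<in> ss!(n mod l)" using ssj[of "n mod l"] l n by (auto simp: \<phi>_def)
      moreover have "ss!(n mod l) \<in> set ss" using len l by simp
      ultimately show "x \<in> \<Union>(set ss)" by blast
    qed
  qed
  have sl: "sorted_list_of_set (\<Union>(set ss)) = map \<phi> [0..<k*l]" "card (\<Union>(set ss)) = k*l"
    using sl_img[of "k*l" \<phi>] mono U by auto
  have sub: "\<Union>(set ss) \<subseteq> L"
  proof
    fix x assume "x \<in> \<Union>(set ss)"
    then obtain j where "j < l" "x \<in> ss!j" by (auto simp: in_set_conv_nth len[symmetric])
    then show "x \<in> L" using sets by (auto simp: kSubsets_def)
  qed
  have "fX k l (\<Union>(set ss)) = ss"
  proof (rule nth_equalityI)
    show "length (fX k l (\<Union>(set ss))) = length ss" using len by (simp add: fX_def)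
    fix j assume "j < length (fX k l (\<Union>(set ss)))"
    then have j: "j < l" by (simp add: fX_def)
    have "blk k l (\<Union>(set ss)) j = (\<lambda>i. \<phi> (i*l+j)) ` {..<k}"
      unfolding blk_def sl using idx_lt j by auto
    also have "\<dots> = (\<lambda>i. elem (ss!j) (i+1)) ` {..<k}" using j by (simp add: \<phi>_def)
    also have "\<dots> = ss!j" using ssj[OF j] by simp
    finally show "fX k l (\<Union>(set ss)) ! j = ss ! j" using j by (simp add: fX_def)
  qed
  then show ?thesis using sub U sl by simp
qed

theorem mainTheorem1:
  fixes M :: "nat set" and k l p :: nat and P :: "nat \<Rightarrow> nat set list set"
  assumes "infinite M"
    and "(\<Union>j\<in>{1..p}. P j) = Plm l M k"
    and "\<forall>i\<in>{1..p}. \<forall>j\<in>{1..p}. i \<noteq> j \<longrightarrow> P i \<inter> P j = {}"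
  shows "\<exists>L j0. L \<subseteq> M \<and> infinite L \<and> 1 \<le> j0 \<and> j0 \<le> p \<and> Plm l L k \<subseteq> P j0"
proof -
  define sj where "sj X = (SOME j. j \<in> {1..p} \<and> fX k l X \<in> P j)" for X
  define col where "col X = sj X - 1" for X
  have colp: "sj X \<in> {1..p} \<and> fX k l X \<in> P (sj X)"
    if "X \<subseteq> M" "finite X" "card X = k*l" for X
  proof -
    have "fX k l X \<in> Plm l M k" using lemA that by blast
    then have "\<exists>j. j \<in> {1..p} \<and> fX k l X \<in> P j" using assms(2) by blast
    then show ?thesis unfolding sj_def by (rule someI_ex)
  qed
  have "col X < p" if "X \<subseteq> M \<and> finite X \<and> card X = k*l" for X
  proof -
    have "sj X \<in> {1..p}" using colp that by blast
    then show ?thesis unfolding col_def by auto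
  qed
  then have "\<forall>X. X \<subseteq> M \<and> finite X \<and> card X = k*l \<longrightarrow> col X < p" by blast
  from Ramsey[OF assms(1) this] obtain Y t where Y: "Y \<subseteq> M" "infinite Y" "t < p"
    "\<forall>X. X \<subseteq> Y \<and> finite X \<and> card X = k*l \<longrightarrow> col X = t" by blast
  have "Plm l Y k \<subseteq> P (t+1)"
  proof
    fix ss assume "ss \<in> Plm l Y k"
    from lemB[OF this] have u: "\<Union>(set ss) \<subseteq> Y" "finite (\<Union>(set ss))"
      "card (\<Union>(set ss)) = k*l" "fX k l (\<Union>(set ss)) = ss" by auto
    then have c: "col (\<Union>(set ss)) = t" using Y(4) by blast
    have "\<Union>(set ss) \<subseteq> M" using u(1) Y(1) by blast
    from colp[OF this u(2) u(3)] have a: "sj (\<Union>(set ss)) \<in> {1..p}"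
      "fX k l (\<Union>(set ss)) \<in> P (sj (\<Union>(set ss)))" by auto
    have "sj (\<Union>(set ss)) = t + 1" using a(1) c unfolding col_def by auto
    then show "ss \<in> P (t+1)" using a(2) u(4) by simp
  qed
  then show ?thesis using Y by (intro exI[of _ Y] exI[of _ "t+1"]) auto
qed

end
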